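(* Let $f_\xi$ be an invariant probability density of $L_\xi$ and let $\tilde f\in L^1([0,1])$. Then $$\|(\pi_\delta-1)f_\xi\|_{L^1}\le\frac\delta2\xi^{-1}\mathrm{Var}(\rho)\,\|f_\xi-\tilde f\|_{L^1}+\frac\delta2\,\mathrm{Var}(N_\xi L\tilde f).$$
   Context: $T:[0,1]\to[0,1]$ is measurable (nonsingular), $L$ its transfer operator. $\rho$ is of bounded variation supported in $[-1/2,1/2]$, $\int\rho=1$, $\rho_\xi(x)=\xi^{-1}\rho(x/\xi)$, $\mathrm{Var}$ is total variation; with $\pi(x)=\min_{i\in\mathbb Z}|x-2i|$, $N_\xi f=\pi_*(\rho_\xi*\hat f)$ ($\hat f$ extension by $0$, $\pi_*$ pushforward by $\pi$); $L_\xi=N_\xi L$. $\pi_\delta$ is the Ulam projection on the homogeneous partition of $[0,1]$ into intervals of length $\delta$ (replacing a function by its average on each interval). *)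

theory Defs
  imports "HOL-Analysis.Analysis"
begin

definition tvar :: "(real \<Rightarrow> real) \<Rightarrow> real set \<Rightarrow> ereal" where
  "tvar f S = (SUP p \<in> {(x, n). (\<forall>i<n. x i \<le> x (Suc i)) \<and> (\<forall>i\<le>n. x i \<in> S)}.
       ereal (\<Sum>i<snd p. \<bar>f (fst p (Suc i)) - f (fst p i)\<bar>))"

definition nonsingular_map :: "(real \<Rightarrow> real) \<Rightarrow> bool" where
  "nonsingular_map T \<longleftrightarrow> (\<forall>x\<in>{0..1}. T x \<in> {0..1})
     \<and> T \<in> borel_measurable (restrict_space lebesgue {0..1})
     \<and> (\<forall>A \<in> null_sets lebesgue. A \<subseteq> {0..1} \<longrightarrow> T -` A \<inter> {0..1} \<in> null_sets lebesgue)"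

definition transfer_operator :: "(real \<Rightarrow> real) \<Rightarrow> ((real \<Rightarrow> real) \<Rightarrow> (real \<Rightarrow> real)) \<Rightarrow> bool" where
  "transfer_operator T L \<longleftrightarrow> (\<forall>f. set_integrable lebesgue {0..1} f \<longrightarrow>
      set_integrable lebesgue {0..1} (L f) \<and>
      (\<forall>g. g \<in> borel_measurable borel \<longrightarrow> bounded (range g) \<longrightarrow>
         (LINT x:{0..1}|lebesgue. L f x * g x) = (LINT x:{0..1}|lebesgue. f x * g (T x))))"

definition rescale :: "(real \<Rightarrow> real) \<Rightarrow> real \<Rightarrow> real \<Rightarrow> real" where
  "rescale \<rho> \<xi> x = \<rho> (x / \<xi>) / \<xi>"

text \<open>Convolution rho_xi * \<hat>f, where \<hat>f is f on [0,1] extended by 0.\<close>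
definition conv_ext :: "(real \<Rightarrow> real) \<Rightarrow> real \<Rightarrow> (real \<Rightarrow> real) \<Rightarrow> real \<Rightarrow> real" where
  "conv_ext \<rho> \<xi> f x = (LINT y:{0..1}|lebesgue. rescale \<rho> \<xi> (x - y) * f y)"

text \<open>Density of the pushforward under pi(x) = min_i |x - 2i| (folding map onto [0,1]):
  the preimages of y are the points 2i + y and 2i - y (i integer); at y = 0, 1 this is the
  continuous extension.\<close>
definition fold_push :: "(real \<Rightarrow> real) \<Rightarrow> real \<Rightarrow> real" where
  "fold_push h y = (\<Sum>\<^sub>\<infinity> i::int. h (2 * real_of_int i + y) + h (2 * real_of_int i - y))"

definition noise_op :: "(real \<Rightarrow> real) \<Rightarrow> real \<Rightarrow> (real \<Rightarrow> real) \<Rightarrow> real \<Rightarrow> real" where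
  "noise_op \<rho> \<xi> f = fold_push (conv_ext \<rho> \<xi> f)"

definition ulam :: "nat \<Rightarrow> (real \<Rightarrow> real) \<Rightarrow> real \<Rightarrow> real" where
  "ulam n f x = (let k = min (n - 1) (nat \<lfloor>x * real n\<rfloor>) in
      real n * (LINT y:{real k / real n .. real (Suc k) / real n}|lebesgue. f y))"

end

theory Submission
  imports Defs
begin


fun psl :: "(real \<Rightarrow> real) \<Rightarrow> real list \<Rightarrow> real" where
  "psl f (x # y # zs) = \<bar>f y - f x\<bar> + psl f (y # zs)"
| "psl f _ = 0"

lemma psl_nonneg: "psl f xs \<ge> 0"
  by (induction f xs rule: psl.induct) auto

lemma psl_Cons_ge: "psl f xs \<le> psl f (x # xs)"
  by (cases xs) (auto simp: psl_nonneg)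

lemma psl_append_ge: "psl f xs + psl f ys \<le> psl f (xs @ ys)"
proof (induction f xs rule: psl.induct)
  case (1 f x y zs)
  then show ?case by simp
next
  case ("2_1" f)
  then show ?case by simp
next
  case ("2_2" f v)
  then show ?case by (simp add: psl_Cons_ge)
qed

lemma psl_snoc: "psl f (xs @ [a, b]) = psl f (xs @ [a]) + \<bar>f b - f a\<bar>"
proof (induction xs)
  case Nil then show ?case by simp
next
  case (Cons x xs)
  then show ?case by (cases xs) auto
qed

lemma psl_rev: "psl f (rev xs) = psl f xs"
proof (induction xs)
  case Nil then show ?case by simp
next
  case (Cons x xs)
  show ?case
  proof (cases xs)
    case Nil then show ?thesis by simp
  next
    case (Cons y ys)
    have "psl f (rev (x # xs)) = psl f (rev ys @ [y, x])" using Cons by simp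
    also have "\<dots> = psl f (rev ys @ [y]) + \<bar>f x - f y\<bar>" by (rule psl_snoc)
    also have "\<dots> = psl f (x # xs)" using Cons.IH Cons by (simp add: abs_minus_commute)
    finally show ?thesis .
  qed
qed

lemma psl_map: "psl f (map h xs) = psl (f \<circ> h) xs"
  by (induction "f \<circ> h" xs rule: psl.induct) auto

lemma psl_nth: "psl f xs = (\<Sum>i<length xs - 1. \<bar>f (xs ! Suc i) - f (xs ! i)\<bar>)"
proof (induction f xs rule: psl.induct)
  case (1 f x y zs)
  then show ?case by (simp add: sum.lessThan_Suc_shift del: sum.lessThan_Suc)
qed auto

lemma tvar_le:
  assumes "\<And>xs. sorted xs \<Longrightarrow> set xs \<subseteq> S \<Longrightarrow> psl f xs \<le> B"
  shows "tvar f S \<le> ereal B"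
  unfolding tvar_def
proof (rule SUP_least, clarify)
  fix x n assume m: "\<forall>i<n. x i \<le> x (Suc i)" and s: "\<forall>i\<le>n. x i \<in> S"
  let ?xs = "map x [0..<Suc n]"
  have "sorted ?xs" unfolding sorted_iff_nth_Suc using m by (simp del: upt_Suc add: nth_map_upt)
  moreover have "set ?xs \<subseteq> S" using s by auto
  ultimately have "psl f ?xs \<le> B" by (rule assms)
  moreover have "psl f ?xs = (\<Sum>i<n. \<bar>f (x (Suc i)) - f (x i)\<bar>)"
    by (simp add: psl_nth del: upt_Suc)
  ultimately show "ereal (\<Sum>i<snd (x, n). \<bar>f (fst (x, n) (Suc i)) - f (fst (x, n) i)\<bar>) \<le> ereal B"
    by simp
qed

lemma tvar_ge:
  assumes "sorted xs" "set xs \<subseteq> S" "xs \<noteq> []"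
  shows "ereal (psl f xs) \<le> tvar f S"
  unfolding tvar_def
proof (rule SUP_upper2)
  show "((\<lambda>i. xs ! i), length xs - 1) \<in> {(x, n). (\<forall>i<n. x i \<le> x (Suc i)) \<and> (\<forall>i\<le>n. x i \<in> S)}"
    using assms by (auto simp: sorted_iff_nth_Suc intro!: nth_mem[THEN subsetD[OF assms(2)]] dest: le_imp_less_Suc)
  show "ereal (psl f xs) \<le> ereal (\<Sum>i<snd ((\<lambda>i. xs ! i), length xs - 1). \<bar>f (fst ((\<lambda>i. xs ! i), length xs - 1) (Suc i)) - f (fst ((\<lambda>i. xs ! i), length xs - 1) i)\<bar>)"
    by (simp add: psl_nth)
qed



lemma real_affine_lebesgue:
  fixes c t :: real assumes "c \<noteq> 0"
  shows "(\<lambda>x. t + c * x) \<in> lebesgue \<rightarrow>\<^sub>M lebesgue"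
  using lebesgue_affine_measurable[where c="\<lambda>_. c" and t=t] assms by simp

lemma kern_meas:
  assumes "\<rho> \<in> borel_measurable lebesgue" "\<xi> > 0"
  shows "(\<lambda>y. rescale \<rho> \<xi> (x - y)) \<in> borel_measurable lebesgue"
proof -
  have a: "(\<lambda>y::real. x/\<xi> + (-1/\<xi>) * y) \<in> lebesgue \<rightarrow>\<^sub>M lebesgue"
    using assms by (intro real_affine_lebesgue) auto
  have "(\<lambda>y. \<rho> (x/\<xi> + (-1/\<xi>) * y)) \<in> borel_measurable lebesgue"
    using measurable_comp[OF a assms(1)] by (simp add: o_def)
  then have "(\<lambda>y. \<rho> (x/\<xi> + (-1/\<xi>) * y) / \<xi>) \<in> borel_measurable lebesgue" by simp
  moreover have "\<And>y. \<rho> (x/\<xi> + (-1/\<xi>) * y) / \<xi> = rescale \<rho> \<xi> (x - y)"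
    using assms(2) by (simp add: rescale_def diff_divide_distrib)
  ultimately show ?thesis by simp
qed

lemma rho_fin:
  assumes "tvar \<rho> UNIV < \<infinity>"
  shows "tvar \<rho> UNIV = ereal (real_of_ereal (tvar \<rho> UNIV))"
    and "real_of_ereal (tvar \<rho> UNIV) \<ge> 0"
proof -
  have "ereal (psl \<rho> [0]) \<le> tvar \<rho> UNIV" by (rule tvar_ge) auto
  then have ge: "0 \<le> tvar \<rho> UNIV" by (simp add: zero_ereal_def)
  then show "tvar \<rho> UNIV = ereal (real_of_ereal (tvar \<rho> UNIV))"
    using assms by (cases "tvar \<rho> UNIV") auto
  show "real_of_ereal (tvar \<rho> UNIV) \<ge> 0" using ge by (simp add: real_of_ereal_pos)
qed

lemma rho_psl:
  assumes "tvar \<rho> UNIV < \<infinity>" "sorted xs"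
  shows "psl \<rho> xs \<le> real_of_ereal (tvar \<rho> UNIV)"
proof (cases "xs = []")
  case True then show ?thesis using rho_fin[OF assms(1)] by simp
next
  case False
  have "ereal (psl \<rho> xs) \<le> tvar \<rho> UNIV" by (rule tvar_ge) (use assms False in auto)
  then show ?thesis using rho_fin[OF assms(1)] by (metis ereal_less_eq(3))
qed

lemma rho_bound:
  assumes "tvar \<rho> UNIV < \<infinity>" "\<forall>x. \<bar>x\<bar> > 1/2 \<longrightarrow> \<rho> x = 0"
  shows "\<bar>\<rho> t\<bar> \<le> real_of_ereal (tvar \<rho> UNIV)"
proof -
  have "psl \<rho> [min t 1, max t 1] \<le> real_of_ereal (tvar \<rho> UNIV)"
    by (rule rho_psl[OF assms(1)]) auto
  moreover have "\<rho> 1 = 0" using assms(2) by auto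
  ultimately show ?thesis by (cases "t \<le> 1") (auto simp: min_def max_def abs_minus_commute)
qed



lemma psl_div: "c > 0 \<Longrightarrow> psl (\<lambda>x. f x / c) xs = psl f xs / c"
  by (induction f xs rule: psl.induct) (auto simp: diff_divide_distrib[symmetric] add_divide_distrib)

lemma kh_int:
  assumes rm: "\<rho> \<in> borel_measurable lebesgue" and xi: "\<xi> > 0"
    and rb: "\<And>t. \<bar>\<rho> t\<bar> \<le> R"
    and h: "set_integrable lebesgue {0..1} h"
  shows "set_integrable lebesgue {0..1} (\<lambda>y. rescale \<rho> \<xi> (x - y) * h y)"
proof (rule set_integrable_bound[where f="\<lambda>y. (R/\<xi>) * h y"])
  show "set_integrable lebesgue {0..1} (\<lambda>y. R / \<xi> * h y)" using h by simp
  have m1: "(\<lambda>y. rescale \<rho> \<xi> (x - y)) \<in> borel_measurable lebesgue" by (rule kern_meas[OF rm xi])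
  have m2: "(\<lambda>y. indicator {0..1} y *\<^sub>R h y) \<in> borel_measurable lebesgue"
    using h unfolding set_integrable_def by (rule borel_measurable_integrable)
  have "(\<lambda>y. rescale \<rho> \<xi> (x - y) * (indicator {0..1} y *\<^sub>R h y)) \<in> borel_measurable lebesgue"
    using m1 m2 by (rule borel_measurable_times)
  then show "set_borel_measurable lebesgue {0..1} (\<lambda>y. rescale \<rho> \<xi> (x - y) * h y)"
    unfolding set_borel_measurable_def by (simp add: mult.left_commute)
  show "AE y in lebesgue. y \<in> {0..1} \<longrightarrow> norm (rescale \<rho> \<xi> (x - y) * h y) \<le> norm (R / \<xi> * h y)"
  proof (rule AE_I2, rule impI)
    fix y
    have "\<bar>rescale \<rho> \<xi> (x - y)\<bar> \<le> R / \<xi>"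
      using rb[of "(x-y)/\<xi>"] xi by (simp add: rescale_def divide_right_mono)
    moreover have "R \<ge> 0" using rb[of 0] by simp
    ultimately show "norm (rescale \<rho> \<xi> (x - y) * h y) \<le> norm (R / \<xi> * h y)"
      using xi mult_right_mono[of "\<bar>rescale \<rho> \<xi> (x - y)\<bar>" "R/\<xi>" "\<bar>h y\<bar>"] by (simp add: abs_mult)
  qed
qed

lemma conv_psl_aux:
  assumes rm: "\<rho> \<in> borel_measurable lebesgue" and xi: "\<xi> > 0"
    and rb: "\<And>t. \<bar>\<rho> t\<bar> \<le> R"
    and h: "set_integrable lebesgue {0..1} h"
  shows "set_integrable lebesgue {0..1} (\<lambda>y. psl (\<lambda>x. rescale \<rho> \<xi> (x - y)) xs * \<bar>h y\<bar>) \<and>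
    psl (conv_ext \<rho> \<xi> h) xs \<le> (LINT y:{0..1}|lebesgue. psl (\<lambda>x. rescale \<rho> \<xi> (x - y)) xs * \<bar>h y\<bar>)"
proof (induction xs)
  case Nil then show ?case by simp
next
  case (Cons x xs)
  show ?case
  proof (cases xs)
    case Nil then show ?thesis by simp
  next
    case (Cons z zs)
    let ?k = "\<lambda>x y. rescale \<rho> \<xi> (x - y)"
    have ix: "set_integrable lebesgue {0..1} (\<lambda>y. ?k x y * h y)" by (rule kh_int[OF rm xi rb h])
    have iz: "set_integrable lebesgue {0..1} (\<lambda>y. ?k z y * h y)" by (rule kh_int[OF rm xi rb h])
    have idiff: "set_integrable lebesgue {0..1} (\<lambda>y. (?k z y - ?k x y) * h y)"
      using set_integral_diff(1)[OF iz ix] by (simp add: left_diff_distrib)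
    have iabs: "set_integrable lebesgue {0..1} (\<lambda>y. \<bar>?k z y - ?k x y\<bar> * \<bar>h y\<bar>)"
      using set_integrable_abs[OF idiff] by (simp add: abs_mult)
    have "conv_ext \<rho> \<xi> h z - conv_ext \<rho> \<xi> h x = (LINT y:{0..1}|lebesgue. (?k z y - ?k x y) * h y)"
      unfolding conv_ext_def using set_integral_diff(2)[OF iz ix] by (simp add: left_diff_distrib)
    then have "\<bar>conv_ext \<rho> \<xi> h z - conv_ext \<rho> \<xi> h x\<bar> \<le> (LINT y:{0..1}|lebesgue. \<bar>?k z y - ?k x y\<bar> * \<bar>h y\<bar>)"
      using set_integral_norm_bound[OF idiff] by (simp add: abs_mult)
    moreover have IH: "set_integrable lebesgue {0..1} (\<lambda>y. psl (\<lambda>x. ?k x y) xs * \<bar>h y\<bar>)"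
      "psl (conv_ext \<rho> \<xi> h) xs \<le> (LINT y:{0..1}|lebesgue. psl (\<lambda>x. ?k x y) xs * \<bar>h y\<bar>)"
      using Cons.IH by auto
    ultimately have
      "psl (conv_ext \<rho> \<xi> h) (x # xs) \<le> (LINT y:{0..1}|lebesgue. \<bar>?k z y - ?k x y\<bar> * \<bar>h y\<bar>)
         + (LINT y:{0..1}|lebesgue. psl (\<lambda>x. ?k x y) xs * \<bar>h y\<bar>)"
      using Cons by simp
    also have "\<dots> = (LINT y:{0..1}|lebesgue. psl (\<lambda>x. ?k x y) (x # xs) * \<bar>h y\<bar>)"
      using set_integral_add(2)[OF iabs IH(1)] Cons by (simp add: distrib_right)
    finally show ?thesis
      using set_integral_add(1)[OF iabs IH(1)] Cons by (simp add: distrib_right)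
  qed
qed

lemma conv_psl:
  assumes rm: "\<rho> \<in> borel_measurable lebesgue" and xi: "\<xi> > 0"
    and rb: "\<And>t. \<bar>\<rho> t\<bar> \<le> R" and rp: "\<And>xs. sorted xs \<Longrightarrow> psl \<rho> xs \<le> R"
    and h: "set_integrable lebesgue {0..1} h"
    and s: "sorted xs"
  shows "psl (conv_ext \<rho> \<xi> h) xs \<le> R / \<xi> * (LINT y:{0..1}|lebesgue. \<bar>h y\<bar>)"
proof -
  note A = conv_psl_aux[OF rm xi rb h, of xs]
  have "psl (conv_ext \<rho> \<xi> h) xs \<le> (LINT y:{0..1}|lebesgue. psl (\<lambda>x. rescale \<rho> \<xi> (x - y)) xs * \<bar>h y\<bar>)"
    using A by simp
  also have "\<dots> \<le> (LINT y:{0..1}|lebesgue. R / \<xi> * \<bar>h y\<bar>)"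
  proof (rule set_integral_mono)
    show "set_integrable lebesgue {0..1} (\<lambda>y. R / \<xi> * \<bar>h y\<bar>)"
      using set_integrable_abs[OF h] by simp
    show "set_integrable lebesgue {0..1} (\<lambda>y. psl (\<lambda>x. rescale \<rho> \<xi> (x - y)) xs * \<bar>h y\<bar>)"
      using A by simp
    fix y
    have "psl (\<lambda>x. rescale \<rho> \<xi> (x - y)) xs = psl (\<lambda>x. \<rho> ((x - y) / \<xi>)) xs / \<xi>"
      unfolding rescale_def by (rule psl_div[OF xi])
    also have "psl (\<lambda>x. \<rho> ((x - y) / \<xi>)) xs = psl \<rho> (map (\<lambda>x. (x - y) / \<xi>) xs)"
      by (simp add: psl_map o_def)
    also have "\<dots> \<le> R"
    proof (rule rp)
      show "sorted (map (\<lambda>x. (x - y) / \<xi>) xs)"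
        unfolding sorted_map using s xi
        by (auto simp: sorted_wrt_iff_nth_less sorted_iff_nth_mono_less divide_right_mono)
    qed
    finally have "psl (\<lambda>x. rescale \<rho> \<xi> (x - y)) xs \<le> R / \<xi>" using xi by (simp add: divide_right_mono)
    then show "psl (\<lambda>x. rescale \<rho> \<xi> (x - y)) xs * \<bar>h y\<bar> \<le> R / \<xi> * \<bar>h y\<bar>"
      using mult_right_mono[of _ "R/\<xi>" "\<bar>h y\<bar>"] by simp
  qed
  also have "\<dots> = R / \<xi> * (LINT y:{0..1}|lebesgue. \<bar>h y\<bar>)" by simp
  finally show ?thesis .
qed



lemma psl_cong: "(\<And>x. x \<in> set xs \<Longrightarrow> f x = g x) \<Longrightarrow> psl f xs = psl g xs"
  by (induction f xs rule: psl.induct) auto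

lemma conv_zero:
  assumes supp: "\<forall>x. \<bar>x\<bar> > 1/2 \<longrightarrow> \<rho> x = 0" and xi: "\<xi> > 0"
    and x: "x < -\<xi>/2 \<or> x > 1 + \<xi>/2"
  shows "conv_ext \<rho> \<xi> h x = 0"
proof -
  have H: "\<forall>y. y \<in> {0..1} \<longrightarrow> rescale \<rho> \<xi> (x - y) * h y = 0"
  proof (intro allI impI)
    fix y :: real assume y: "y \<in> {0..1}"
    have "\<bar>(x - y) / \<xi>\<bar> > 1/2"
    proof (cases "x < -\<xi>/2")
      case True
      then have "(x - y) < - \<xi>/2" using y by auto
      then have "(x - y) / \<xi> < -1/2" using xi by (simp add: field_simps)
      then show ?thesis by linarith
    next
      case False
      then have "(x - y) > \<xi>/2" using y x by auto
      then have "(x - y) / \<xi> > 1/2" using xi by (simp add: field_simps)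
      then show ?thesis by linarith
    qed
    then show "rescale \<rho> \<xi> (x - y) * h y = 0" using supp by (simp add: rescale_def)
  qed
  have "(LINT y:{0..1}|lebesgue. rescale \<rho> \<xi> (x - y) * h y) = (LINT y:{0..1}|lebesgue. 0)"
    using set_lebesgue_integral_cong[OF _ H] by simp
  then show ?thesis by (simp add: conv_ext_def)
qed

lemma fold_finite:
  assumes xi: "\<xi> > 0"
    and cz: "\<And>x. x < -\<xi>/2 \<or> x > 1 + \<xi>/2 \<Longrightarrow> c x = 0"
    and y: "y \<in> {0..1}"
  shows "fold_push c y = (\<Sum>i\<in>{-(\<lceil>\<xi>\<rceil>+1)..\<lceil>\<xi>\<rceil>+1}. c (2 * real_of_int i + y) + c (2 * real_of_int i - y))"
proof -
  let ?M = "\<lceil>\<xi>\<rceil>+1"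
  have "fold_push c y = infsum (\<lambda>i::int. c (2 * real_of_int i + y) + c (2 * real_of_int i - y)) {-?M..?M}"
    unfolding fold_push_def
  proof (rule infsum_cong_neutral)
    fix i :: int assume "i \<in> UNIV - {-?M..?M}"
    then have "i > ?M \<or> i < -?M" by auto
    then show "c (2 * real_of_int i + y) + c (2 * real_of_int i - y) = 0"
    proof
      assume "i > ?M"
      then have "\<lceil>\<xi>\<rceil> + 2 \<le> i" by linarith
      then have "real_of_int (\<lceil>\<xi>\<rceil> + 2) \<le> real_of_int i" by (simp only: of_int_le_iff)
      then have "real_of_int \<lceil>\<xi>\<rceil> + 2 \<le> real_of_int i" by simp
      then have "real_of_int i \<ge> \<xi> + 2" using le_of_int_ceiling[of \<xi>] by linarith
      then have "2 * real_of_int i + y > 1 + \<xi>/2" "2 * real_of_int i - y > 1 + \<xi>/2" using y xi by auto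
      then show ?thesis using cz by simp
    next
      assume "i < -?M"
      then have "i \<le> - \<lceil>\<xi>\<rceil> - 2" by linarith
      then have "real_of_int i \<le> real_of_int (- \<lceil>\<xi>\<rceil> - 2)" by (simp only: of_int_le_iff)
      then have "real_of_int i \<le> - real_of_int \<lceil>\<xi>\<rceil> - 2" by simp
      then have "real_of_int i \<le> -\<xi> - 2" using le_of_int_ceiling[of \<xi>] by linarith
      then have "2 * real_of_int i + y < -\<xi>/2" "2 * real_of_int i - y < -\<xi>/2" using y xi by auto
      then show ?thesis using cz by simp
    qed
  qed auto
  then show ?thesis by simp
qed

lemma psl_sum_bound:
  fixes F :: "real \<Rightarrow> real" and I :: "int set"
  assumes F: "\<And>y. y \<in> set ys \<Longrightarrow> F y = (\<Sum>i\<in>I. c (2 * real_of_int i + y) + c (2 * real_of_int i - y))"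
  shows "psl F ys \<le> (\<Sum>i\<in>I. psl (\<lambda>y. c (2 * real_of_int i + y)) ys + psl (\<lambda>y. c (2 * real_of_int i - y)) ys)"
  using F
proof (induction F ys rule: psl.induct)
  case (1 F x y zs)
  have "\<bar>F y - F x\<bar> = \<bar>\<Sum>i\<in>I. (c (2 * real_of_int i + y) - c (2 * real_of_int i + x)) + (c (2 * real_of_int i - y) - c (2 * real_of_int i - x))\<bar>"
    using "1.prems" by (simp add: sum_subtractf[symmetric] algebra_simps)
  also have "\<dots> \<le> (\<Sum>i\<in>I. \<bar>(c (2 * real_of_int i + y) - c (2 * real_of_int i + x)) + (c (2 * real_of_int i - y) - c (2 * real_of_int i - x))\<bar>)"
    by (rule sum_abs)
  also have "\<dots> \<le> (\<Sum>i\<in>I. \<bar>c (2 * real_of_int i + y) - c (2 * real_of_int i + x)\<bar> + \<bar>c (2 * real_of_int i - y) - c (2 * real_of_int i - x)\<bar>)"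
    by (rule sum_mono) (rule abs_triangle_ineq)
  finally have a: "\<bar>F y - F x\<bar> \<le> \<dots>" .
  have b: "psl F (y # zs) \<le> (\<Sum>i\<in>I. psl (\<lambda>y. c (2 * real_of_int i + y)) (y # zs) + psl (\<lambda>y. c (2 * real_of_int i - y)) (y # zs))"
    using "1.IH" "1.prems" by simp
  show ?case using add_mono[OF a b] by (simp add: sum.distrib algebra_simps)
qed auto

lemma psl_concat: "sum_list (map (psl f) Ls) \<le> psl f (concat Ls)"
proof (induction Ls)
  case (Cons L Ls)
  then show ?case using psl_append_ge[of f L "concat Ls"] by simp
qed simp

lemma sorted_blocks:
  fixes ys :: "real list" and js :: "int list"
  assumes ys: "sorted ys" "set ys \<subseteq> {0..1}" and js: "sorted_wrt (<) js"
  shows "sorted (concat (map (\<lambda>i. rev (map (\<lambda>y. 2 * real_of_int i - y) ys) @ map (\<lambda>y. 2 * real_of_int i + y) ys) js))"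
  using js
proof (induction js)
  case Nil then show ?case by simp
next
  case (Cons i js)
  let ?B = "\<lambda>i. rev (map (\<lambda>y. 2 * real_of_int i - y) ys) @ map (\<lambda>y. 2 * real_of_int i + y) ys"
  have sB: "sorted (?B i)"
    unfolding sorted_append sorted_wrt_rev sorted_map
  proof (intro conjI ballI)
    show "sorted_wrt (\<lambda>x y. y \<le> x) (map (\<lambda>y. 2 * real_of_int i - y) ys)"
      using ys(1) by (auto simp: sorted_wrt_map elim!: sorted_wrt_mono_rel[rotated])
    show "sorted_wrt (\<lambda>x y. 2 * real_of_int i + x \<le> 2 * real_of_int i + y) ys"
      using ys(1) by (auto elim!: sorted_wrt_mono_rel[rotated])
    fix x z assume "x \<in> set (rev (map (\<lambda>y. 2 * real_of_int i - y) ys))" "z \<in> set (map (\<lambda>y. 2 * real_of_int i + y) ys)"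
    then obtain a b where "a \<in> set ys" "b \<in> set ys" "x = 2 * real_of_int i - a" "z = 2 * real_of_int i + b" by auto
    moreover have "a \<ge> 0" "b \<ge> 0" using ys(2) calculation(1,2) by auto
    ultimately show "x \<le> z" by simp
  qed
  have rB: "\<And>j x. x \<in> set (?B j) \<Longrightarrow> 2 * real_of_int j - 1 \<le> x \<and> x \<le> 2 * real_of_int j + 1"
    using ys by auto
  have "\<forall>x\<in>set (?B i). \<forall>z\<in>set (concat (map ?B js)). x \<le> z"
  proof (intro ballI)
    fix x z assume x: "x \<in> set (?B i)" and z: "z \<in> set (concat (map ?B js))"
    then obtain j where j: "j \<in> set js" "z \<in> set (?B j)" by auto
    have "i < j" using Cons.prems j(1) by auto
    then have "real_of_int i + 1 \<le> real_of_int j" by linarith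
    then show "x \<le> z" using rB[OF x] rB[OF j(2)] by linarith
  qed
  moreover have "sorted (concat (map ?B js))" using Cons by simp
  ultimately have "sorted (?B i @ concat (map ?B js))" using sB unfolding sorted_append by blast
  then show ?case by simp
qed

lemma fold_psl:
  assumes xi: "\<xi> > 0"
    and cz: "\<And>x. x < -\<xi>/2 \<or> x > 1 + \<xi>/2 \<Longrightarrow> c x = 0"
    and cb: "\<And>zs. sorted zs \<Longrightarrow> psl c zs \<le> B"
    and ys: "sorted ys" "set ys \<subseteq> {0..1}"
  shows "psl (fold_push c) ys \<le> B"
proof -
  let ?M = "\<lceil>\<xi>\<rceil>+1"
  let ?B = "\<lambda>i. rev (map (\<lambda>y. 2 * real_of_int i - y) ys) @ map (\<lambda>y. 2 * real_of_int i + y) ys"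
  have "psl (fold_push c) ys \<le> (\<Sum>i\<in>{-?M..?M}. psl (\<lambda>y. c (2 * real_of_int i + y)) ys + psl (\<lambda>y. c (2 * real_of_int i - y)) ys)"
    by (rule psl_sum_bound) (use fold_finite[OF xi cz] ys in auto)
  also have "\<dots> \<le> (\<Sum>i\<in>{-?M..?M}. psl c (?B i))"
  proof (rule sum_mono)
    fix i :: int
    have "psl c (?B i) \<ge> psl c (rev (map (\<lambda>y. 2 * real_of_int i - y) ys)) + psl c (map (\<lambda>y. 2 * real_of_int i + y) ys)"
      by (rule psl_append_ge)
    then show "psl (\<lambda>y. c (2 * real_of_int i + y)) ys + psl (\<lambda>y. c (2 * real_of_int i - y)) ys \<le> psl c (?B i)"
      by (simp only: psl_rev psl_map o_def)
  qed
  also have "\<dots> = sum_list (map (\<lambda>i. psl c (?B i)) [-?M..?M])"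
    using sum_list_distinct_conv_sum_set[of "[-?M..?M]" "\<lambda>i. psl c (?B i)"] by simp
  also have "\<dots> = sum_list (map (psl c) (map ?B [-?M..?M]))"
    by (simp only: map_map o_def)
  also have "\<dots> \<le> psl c (concat (map ?B [-?M..?M]))" by (rule psl_concat)
  also have "\<dots> \<le> B" by (rule cb, rule sorted_blocks[OF ys]) simp
  finally show ?thesis .
qed



lemma Icc_lebesgue_facts:
  fixes a b :: real assumes "a \<le> b"
  shows "emeasure lebesgue {a..b} = ennreal (b - a)" "measure lebesgue {a..b} = b - a"
  using assms by auto

lemma set_integrable_const_Icc:
  fixes a b c :: real
  shows "set_integrable lebesgue {a..b} (\<lambda>_. c)"
proof -
  have "integrable lebesgue (\<lambda>x. c * indicat_real {a..b} x)"
    by (rule integrable_mult_right) (cases "a \<le> b"; auto)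
  then show ?thesis unfolding set_integrable_def by (simp add: mult.commute)
qed

lemma set_integral_const_Icc:
  fixes a b c :: real assumes "a \<le> b"
  shows "(LINT x:{a..b}|lebesgue. c) = (b - a) * c"
  using set_integral_const[of "{a..b}" lebesgue c] assms by simp

lemma set_integrable_bounded_Icc:
  fixes f :: "real \<Rightarrow> real"
  assumes "set_borel_measurable lebesgue {a..b} f" "\<And>x. x \<in> {a..b} \<Longrightarrow> \<bar>f x\<bar> \<le> C"
  shows "set_integrable lebesgue {a..b} f"
  by (rule set_integrable_bound[OF set_integrable_const_Icc[of a b C] assms(1)])
     (use assms(2) in \<open>force intro!: AE_I2\<close>)

lemma set_meas_comp:
  fixes p :: "real \<Rightarrow> real" and a b :: real
  assumes pi: "set_integrable lebesgue {a..b} p" and phi: "\<phi> \<in> borel_measurable borel"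
  shows "set_borel_measurable lebesgue {a..b} (\<lambda>x. \<phi> (p x) :: real)"
proof -
  have pm: "(\<lambda>x. indicator {a..b} x *\<^sub>R p x) \<in> borel_measurable lebesgue"
    using pi unfolding set_integrable_def by (rule borel_measurable_integrable)
  have Im: "(indicator {a..b} :: real \<Rightarrow> real) \<in> borel_measurable lebesgue"
    using borel_measurable_indicator[of "{a..b}" lebesgue] by auto
  have "(\<lambda>x. \<phi> (indicator {a..b} x *\<^sub>R p x)) \<in> borel_measurable lebesgue"
    using measurable_comp[OF pm phi] by (simp add: o_def)
  then have meas: "(\<lambda>x. indicator {a..b} x *\<^sub>R \<phi> (indicator {a..b} x *\<^sub>R p x)) \<in> borel_measurable lebesgue"
    using Im by (intro borel_measurable_scaleR)
  have eq: "(\<lambda>x. indicator {a..b} x *\<^sub>R \<phi> (indicator {a..b} x *\<^sub>R p x)) = (\<lambda>x. indicator {a..b} x *\<^sub>R \<phi> (p x))"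
    by (rule ext) (simp split: split_indicator)
  show ?thesis using meas unfolding eq set_borel_measurable_def .
qed

lemma osc_bound:
  fixes p :: "real \<Rightarrow> real" and a b lo hi :: real
  assumes ab: "a < b" and pi: "set_integrable lebesgue {a..b} p"
    and bnd: "\<And>x. x \<in> {a..b} \<Longrightarrow> lo \<le> p x \<and> p x \<le> hi"
  shows "(LINT x:{a..b}|lebesgue. \<bar>p x - (LINT y:{a..b}|lebesgue. p y) / (b - a)\<bar>) \<le> (b - a) / 2 * (hi - lo)"
proof -
  define \<mu> where "\<mu> = (LINT y:{a..b}|lebesgue. p y) / (b - a)"
  have "(LINT y:{a..b}|lebesgue. lo) \<le> (LINT y:{a..b}|lebesgue. p y)"
    by (rule set_integral_mono[OF set_integrable_const_Icc pi]) (use bnd in auto)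
  then have lo_mu: "lo \<le> \<mu>" using ab by (simp add: set_integral_const_Icc \<mu>_def field_simps)
  have "(LINT y:{a..b}|lebesgue. p y) \<le> (LINT y:{a..b}|lebesgue. hi)"
    by (rule set_integral_mono[OF pi set_integrable_const_Icc]) (use bnd in auto)
  then have mu_hi: "\<mu> \<le> hi" using ab by (simp add: set_integral_const_Icc \<mu>_def field_simps)
  define Xf where "Xf x = max (p x - \<mu>) 0" for x
  define Nf where "Nf x = max (\<mu> - p x) 0" for x
  define pos where "pos x = (if p x - \<mu> > 0 then 1 else 0 :: real)" for x
  define neg where "neg x = (if p x - \<mu> < 0 then 1 else 0 :: real)" for x
  have C: "\<And>x. x \<in> {a..b} \<Longrightarrow> \<bar>p x - \<mu>\<bar> \<le> hi - lo" using bnd lo_mu mu_hi by fastforce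
  have iX: "set_integrable lebesgue {a..b} Xf"
    unfolding Xf_def
    by (rule set_integrable_bounded_Icc[where C="hi - lo"], rule set_meas_comp[OF pi, where \<phi>="\<lambda>t. max (t - \<mu>) 0"])
       (use C lo_mu mu_hi in \<open>auto simp: abs_le_iff\<close>)
  have iN: "set_integrable lebesgue {a..b} Nf"
    unfolding Nf_def
    by (rule set_integrable_bounded_Icc[where C="hi - lo"], rule set_meas_comp[OF pi, where \<phi>="\<lambda>t. max (\<mu> - t) 0"])
       (use C lo_mu mu_hi in \<open>auto simp: abs_le_iff\<close>)
  have ipos: "set_integrable lebesgue {a..b} pos"
    unfolding pos_def
    by (rule set_integrable_bounded_Icc[where C=1], rule set_meas_comp[OF pi, where \<phi>="\<lambda>t. if t - \<mu> > 0 then 1 else 0"])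
       auto
  have ineg: "set_integrable lebesgue {a..b} neg"
    unfolding neg_def
    by (rule set_integrable_bounded_Icc[where C=1], rule set_meas_comp[OF pi, where \<phi>="\<lambda>t. if t - \<mu> < 0 then 1 else 0"])
       auto
  define X where "X = (LINT x:{a..b}|lebesgue. Xf x)"
  define N where "N = (LINT x:{a..b}|lebesgue. Nf x)"
  define \<beta> where "\<beta> = (LINT x:{a..b}|lebesgue. pos x)"
  define \<alpha> where "\<alpha> = (LINT x:{a..b}|lebesgue. neg x)"
  have "X - N = (LINT x:{a..b}|lebesgue. Xf x - Nf x)"
    unfolding X_def N_def using set_integral_diff(2)[OF iX iN] by simp
  also have "\<dots> = (LINT x:{a..b}|lebesgue. p x - \<mu>)"
    by (rule set_lebesgue_integral_cong) (auto simp: Xf_def Nf_def)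
  also have "\<dots> = (LINT x:{a..b}|lebesgue. p x) - (LINT x:{a..b}|lebesgue. \<mu>)"
    using set_integral_diff(2)[OF pi set_integrable_const_Icc] by simp
  also have "\<dots> = 0" using ab by (simp add: set_integral_const_Icc \<mu>_def)
  finally have XN: "X = N" by simp
  have "(LINT x:{a..b}|lebesgue. \<bar>p x - \<mu>\<bar>) = (LINT x:{a..b}|lebesgue. Xf x + Nf x)"
    by (rule set_lebesgue_integral_cong) (auto simp: Xf_def Nf_def)
  also have "\<dots> = X + N" unfolding X_def N_def using set_integral_add(2)[OF iX iN] by simp
  finally have absI: "(LINT x:{a..b}|lebesgue. \<bar>p x - \<mu>\<bar>) = 2 * X" using XN by simp
  have "X \<le> (LINT x:{a..b}|lebesgue. (hi - \<mu>) * pos x)"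
    unfolding X_def
    by (rule set_integral_mono[OF iX set_integrable_mult_right[OF ipos]]) (use bnd mu_hi in \<open>auto simp: Xf_def pos_def\<close>)
  then have X1: "X \<le> (hi - \<mu>) * \<beta>" by (simp add: \<beta>_def)
  have "N \<le> (LINT x:{a..b}|lebesgue. (\<mu> - lo) * neg x)"
    unfolding N_def
    by (rule set_integral_mono[OF iN set_integrable_mult_right[OF ineg]]) (use bnd lo_mu in \<open>auto simp: Nf_def neg_def\<close>)
  then have X2: "X \<le> (\<mu> - lo) * \<alpha>" using XN by (simp add: \<alpha>_def)
  have "\<alpha> + \<beta> = (LINT x:{a..b}|lebesgue. neg x + pos x)"
    unfolding \<alpha>_def \<beta>_def using set_integral_add(2)[OF ineg ipos] by simp
  also have "\<dots> \<le> (LINT x:{a..b}|lebesgue. 1)"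
    by (rule set_integral_mono[OF set_integral_add(1)[OF ineg ipos] set_integrable_const_Icc])
       (auto simp: neg_def pos_def)
  finally have ab_le: "\<alpha> + \<beta> \<le> b - a" using ab by (simp add: set_integral_const_Icc)
  have "(LINT x:{a..b}|lebesgue. 0) \<le> (LINT x:{a..b}|lebesgue. neg x)"
    by (rule set_integral_mono[OF set_integrable_const_Icc ineg]) (simp add: neg_def)
  then have a0: "\<alpha> \<ge> 0" unfolding \<alpha>_def by simp
  have "(LINT x:{a..b}|lebesgue. 0) \<le> (LINT x:{a..b}|lebesgue. pos x)"
    by (rule set_integral_mono[OF set_integrable_const_Icc ipos]) (simp add: pos_def)
  then have b0: "\<beta> \<ge> 0" unfolding \<beta>_def by simp
  have "(LINT x:{a..b}|lebesgue. 0) \<le> (LINT x:{a..b}|lebesgue. Xf x)"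
    by (rule set_integral_mono[OF set_integrable_const_Icc iX]) (simp add: Xf_def)
  then have X0: "X \<ge> 0" unfolding X_def by simp
  define A where "A = \<mu> - lo"
  define B where "B = hi - \<mu>"
  have A0: "A \<ge> 0" and B0: "B \<ge> 0" using lo_mu mu_hi by (auto simp: A_def B_def)
  have X1': "X \<le> B * \<beta>" and X2': "X \<le> A * \<alpha>" using X1 X2 by (auto simp: A_def B_def)
  have "X * X \<le> (A * \<alpha>) * (B * \<beta>)"
    by (rule mult_mono) (use X1' X2' X0 A0 a0 in auto)
  moreover have "(\<alpha> * B + \<beta> * A)^2 = (\<alpha> * B - \<beta> * A)^2 + 4 * ((A * \<alpha>) * (B * \<beta>))"
    by (simp add: power2_eq_square algebra_simps)
  moreover have "(2 * X)^2 = 4 * (X * X)" by (simp add: power2_eq_square)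
  moreover have "(\<alpha> * B - \<beta> * A)^2 \<ge> 0" by simp
  ultimately have "(2 * X)^2 \<le> (\<alpha> * B + \<beta> * A)^2" by linarith
  then have s2: "2 * X \<le> \<alpha> * B + \<beta> * A"
    by (rule power2_le_imp_le) (use a0 b0 A0 B0 in auto)
  have "4 * X \<le> (\<alpha> + \<beta>) * (A + B)" using s2 X1' X2' by (simp add: algebra_simps)
  also have "\<dots> \<le> (b - a) * (A + B)" using ab_le A0 B0 by (intro mult_right_mono) auto
  finally have "4 * X \<le> (b - a) * (hi - lo)" by (simp add: A_def B_def)
  then show ?thesis using absI by (simp add: \<mu>_def)
qed



definition vfun :: "(real \<Rightarrow> real) \<Rightarrow> real \<Rightarrow> real" where
  "vfun g t = Sup {psl g ys | ys. sorted ys \<and> set ys \<subseteq> {0..t}}"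

lemma vfun_props:
  assumes gb: "\<And>ys. sorted ys \<Longrightarrow> set ys \<subseteq> {0..1} \<Longrightarrow> psl g ys \<le> V"
  shows "vfun g 0 \<ge> 0" "vfun g 1 \<le> V"
    and "\<And>x y. 0 \<le> x \<Longrightarrow> x \<le> y \<Longrightarrow> y \<le> 1 \<Longrightarrow> vfun g x + \<bar>g y - g x\<bar> \<le> vfun g y"
proof -
  let ?S = "\<lambda>t. {psl g ys | ys. sorted ys \<and> set ys \<subseteq> {0..t}}"
  have ne: "\<And>t. ?S t \<noteq> {}" by (auto intro!: exI[of _ "[]"])
  have bdd: "\<And>t. t \<le> 1 \<Longrightarrow> bdd_above (?S t)"
    unfolding bdd_above_def using gb by force
  show "vfun g 0 \<ge> 0" unfolding vfun_def
    by (rule cSup_upper2[of 0]) (use bdd[of 0] in \<open>auto intro!: exI[of _ "[]"]\<close>)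
  show "vfun g 1 \<le> V" unfolding vfun_def
    by (rule cSup_least[OF ne]) (use gb in auto)
  fix x y :: real assume xy: "0 \<le> x" "x \<le> y" "y \<le> 1"
  have "vfun g x \<le> vfun g y - \<bar>g y - g x\<bar>"
    unfolding vfun_def[of g x]
  proof (rule cSup_least[OF ne], clarify)
    fix ys :: "real list" assume ys: "sorted ys" "set ys \<subseteq> {0..x}"
    have "psl g ys + \<bar>g y - g x\<bar> \<le> psl g (ys @ [x]) + \<bar>g y - g x\<bar>"
      using psl_append_ge[of g ys "[x]"] by simp
    also have "\<dots> = psl g (ys @ [x, y])" by (simp add: psl_snoc)
    also have "\<dots> \<le> vfun g y" unfolding vfun_def
    proof (rule cSup_upper[OF _ bdd[OF xy(3)]])
      have "sorted (ys @ [x, y])" using ys xy by (auto simp: sorted_append)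
      moreover have "set (ys @ [x, y]) \<subseteq> {0..y}" using ys xy by auto
      ultimately show "psl g (ys @ [x, y]) \<in> ?S y" by blast
    qed
    finally show "psl g ys \<le> vfun g y - \<bar>g y - g x\<bar>" by simp
  qed
  then show "vfun g x + \<bar>g y - g x\<bar> \<le> vfun g y" by simp
qed

lemma sup_inf_osc:
  fixes g :: "real \<Rightarrow> real" and I :: "real set"
  assumes ne: "I \<noteq> {}" and D: "\<And>x y. x \<in> I \<Longrightarrow> y \<in> I \<Longrightarrow> g x - g y \<le> D"
  shows "\<And>x. x \<in> I \<Longrightarrow> Inf (g ` I) \<le> g x \<and> g x \<le> Sup (g ` I)"
    and "Sup (g ` I) - Inf (g ` I) \<le> D"
proof -
  obtain x0 where x0: "x0 \<in> I" using ne by auto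
  have ba: "bdd_above (g ` I)" unfolding bdd_above_def using D[OF _ x0] by (intro exI[of _ "g x0 + D"]) force
  have bb: "bdd_below (g ` I)" unfolding bdd_below_def using D[OF x0] by (intro exI[of _ "g x0 - D"]) force
  show "\<And>x. x \<in> I \<Longrightarrow> Inf (g ` I) \<le> g x \<and> g x \<le> Sup (g ` I)"
    using ba bb by (auto intro: cInf_lower cSup_upper)
  have D': "\<And>x y. x \<in> I \<Longrightarrow> y \<in> I \<Longrightarrow> g x - D \<le> g y" using D by fastforce
  have "\<And>x. x \<in> I \<Longrightarrow> g x - D \<le> Inf (g ` I)"
    by (rule cInf_greatest) (use ne D' in auto)
  then have "Sup (g ` I) \<le> Inf (g ` I) + D"
    by (intro cSup_least) (use ne in \<open>auto simp: algebra_simps\<close>)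
  then show "Sup (g ` I) - Inf (g ` I) \<le> D" by simp
qed

lemma ulam_bound:
  fixes g :: "real \<Rightarrow> real" and n :: nat
  assumes n: "n > 0" and gi: "set_integrable lebesgue {0..1} g"
    and gb: "\<And>ys. sorted ys \<Longrightarrow> set ys \<subseteq> {0..1} \<Longrightarrow> psl g ys \<le> V"
  shows "(LINT x:{0..1}|lebesgue. \<bar>ulam n g x - g x\<bar>) \<le> V / (2 * real n)"
proof -
  define v where "v = vfun g"
  note vp = vfun_props[OF gb, folded v_def]
  have vd: "\<And>x y. 0 \<le> x \<Longrightarrow> x \<le> y \<Longrightarrow> y \<le> 1 \<Longrightarrow> \<bar>g y - g x\<bar> \<le> v y - v x"
    using vp(3) by fastforce
  have vm: "\<And>x y. 0 \<le> x \<Longrightarrow> x \<le> y \<Longrightarrow> y \<le> 1 \<Longrightarrow> v x \<le> v y"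
    using vd by fastforce
  define a where "a k = real k / real n" for k
  define b where "b k = real (Suc k) / real n" for k
  define m where "m k = real n * (LINT y:{a k..b k}|lebesgue. g y)" for k
  have ab: "\<And>k. a k < b k" using n by (simp add: a_def b_def divide_strict_right_mono)
  have bma: "\<And>k. b k - a k = 1 / real n" using n by (simp add: a_def b_def field_simps)
  have a0: "\<And>k. 0 \<le> a k" by (simp add: a_def)
  have b1: "\<And>k. k < n \<Longrightarrow> b k \<le> 1" using n by (simp add: b_def)
  let ?F = "\<lambda>x. \<bar>ulam n g x - g x\<bar>"
  have ulam_eq: "ulam n g x = m k" if k: "k < n" and x: "x \<in> {a k..<b k}" for k x
  proof -
    have "real k \<le> x * real n" "x * real n < real k + 1"
      using x n by (auto simp: a_def b_def field_simps)
    then have "\<lfloor>x * real n\<rfloor> = int k" by (simp add: floor_eq_iff)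
    then have "min (n - 1) (nat \<lfloor>x * real n\<rfloor>) = k" using k by simp
    then show ?thesis by (simp add: ulam_def m_def a_def b_def Let_def)
  qed
  have per_k: "set_integrable lebesgue {a k..<b k} ?F \<and>
      (LINT x:{a k..<b k}|lebesgue. ?F x) \<le> (1 / real n) / 2 * (v (b k) - v (a k))" if k: "k < n" for k
  proof -
    have sub: "{a k..b k} \<subseteq> {0..1}" using a0 b1[OF k] by auto
    have gI: "set_integrable lebesgue {a k..b k} g"
      by (rule set_integrable_subset[OF gi _ sub]) simp
    have gI': "set_integrable lebesgue {a k..b k} (\<lambda>x. \<bar>g x - m k\<bar>)"
      by (intro set_integrable_abs set_integral_diff(1) gI set_integrable_const_Icc)
    have gA: "set_integrable lebesgue {a k..<b k} (\<lambda>x. \<bar>g x - m k\<bar>)"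
      by (rule set_integrable_subset[OF gI']) auto
    have cong: "\<And>x. x \<in> {a k..<b k} \<Longrightarrow> ?F x = \<bar>g x - m k\<bar>"
      using ulam_eq[OF k] by (simp add: abs_minus_commute)
    have intA: "set_integrable lebesgue {a k..<b k} ?F"
    proof -
      have "set_integrable lebesgue {a k..<b k} ?F = set_integrable lebesgue {a k..<b k} (\<lambda>x. \<bar>g x - m k\<bar>)"
        by (rule set_integrable_cong) (use cong in auto)
      then show ?thesis using gA by simp
    qed
    have hpos: "0 \<le> (b k - a k) / 2" using ab[of k] by simp
    have neI: "{a k..b k} \<noteq> {}" using ab[of k] by auto
    have Dk: "g x - g y \<le> v (b k) - v (a k)" if xy: "x \<in> {a k..b k}" "y \<in> {a k..b k}" for x y
    proof (cases "x \<le> y")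
      case True
      have "\<bar>g y - g x\<bar> \<le> v y - v x" using vd[of x y] xy True a0[of k] b1[OF k] by auto
      moreover have "v y \<le> v (b k)" "v (a k) \<le> v x" using vm xy a0[of k] b1[OF k] by auto
      ultimately show ?thesis by linarith
    next
      case False
      have "\<bar>g x - g y\<bar> \<le> v x - v y" using vd[of y x] xy False a0[of k] b1[OF k] by auto
      moreover have "v x \<le> v (b k)" "v (a k) \<le> v y" using vm xy a0[of k] b1[OF k] by auto
      ultimately show ?thesis by linarith
    qed
    have "(LINT x:{a k..<b k}|lebesgue. ?F x) = (LINT x:{a k..<b k}|lebesgue. \<bar>g x - m k\<bar>)"
      by (rule set_lebesgue_integral_cong) (use cong in auto)
    also have "\<dots> = (LINT x:{a k..b k}|lebesgue. \<bar>g x - m k\<bar>)"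
      by (rule set_integral_discrete_difference[where X="{b k}"]) auto
    also have "m k = (LINT y:{a k..b k}|lebesgue. g y) / (b k - a k)"
      using n by (simp add: m_def bma)
    also have "(LINT x:{a k..b k}|lebesgue. \<bar>g x - (LINT y:{a k..b k}|lebesgue. g y) / (b k - a k)\<bar>)
        \<le> (b k - a k) / 2 * (Sup (g ` {a k..b k}) - Inf (g ` {a k..b k}))"
      by (rule osc_bound[OF ab gI sup_inf_osc(1)[OF neI Dk]])
    also have "\<dots> \<le> (b k - a k) / 2 * (v (b k) - v (a k))"
      using mult_left_mono[OF sup_inf_osc(2)[OF neI Dk] hpos] .
    finally show ?thesis using intA bma by simp
  qed
  have "(LINT x:{0..1}|lebesgue. ?F x) = (LINT x:{0..<1}|lebesgue. ?F x)"
    by (rule set_integral_discrete_difference[where X="{1}"]) auto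
  also have "{0..<1} = (\<Union>k\<in>{..<n}. {a k..<b k})"
  proof
    show "{0..<1} \<subseteq> (\<Union>k\<in>{..<n}. {a k..<b k})"
    proof
      fix x :: real assume x: "x \<in> {0..<1}"
      define k where "k = nat \<lfloor>x * real n\<rfloor>"
      have "x * real n < real n" using x n by simp
      then have "k < n" using x unfolding k_def by (simp add: nat_less_iff floor_less_iff)
      moreover have "real k \<le> x * real n" "x * real n < real k + 1"
        using x unfolding k_def by (simp_all add: of_nat_nat)
      then have "x \<in> {a k..<b k}" using n by (auto simp: a_def b_def field_simps)
      ultimately show "x \<in> (\<Union>k\<in>{..<n}. {a k..<b k})" by blast
    qed
    show "(\<Union>k\<in>{..<n}. {a k..<b k}) \<subseteq> {0..<1}"
    proof (rule subsetI)
      fix x assume "x \<in> (\<Union>k\<in>{..<n}. {a k..<b k})"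
      then obtain k where "k < n" "x \<in> {a k..<b k}" by auto
      then show "x \<in> {0..<1}" using a0[of k] b1[of k] by auto
    qed
  qed
  also have "(LINT x:(\<Union>k\<in>{..<n}. {a k..<b k})|lebesgue. ?F x) = (\<Sum>k<n. LINT x:{a k..<b k}|lebesgue. ?F x)"
  proof (rule set_integral_finite_Union)
    show "disjoint_family_on (\<lambda>k. {a k..<b k}) {..<n}"
      unfolding disjoint_family_on_def
    proof (intro ballI impI)
      fix i j assume ij: "i \<in> {..<n}" "j \<in> {..<n}" "i \<noteq> j"
      show "{a i..<b i} \<inter> {a j..<b j} = {}"
      proof (cases "i < j")
        case True
        then have "b i \<le> a j" using n by (simp add: a_def b_def divide_right_mono)
        then show ?thesis by auto
      next
        case False
        then have "b j \<le> a i" using n ij by (simp add: a_def b_def divide_right_mono)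
        then show ?thesis by auto
      qed
    qed
  qed (use per_k in auto)
  also have "\<dots> \<le> (\<Sum>k<n. (1 / real n) / 2 * (v (b k) - v (a k)))"
    by (rule sum_mono) (use per_k in auto)
  also have "\<dots> = (1 / real n) / 2 * (\<Sum>k<n. v (a (Suc k)) - v (a k))"
    by (simp add: sum_distrib_left a_def b_def)
  also have "\<dots> = (1 / real n) / 2 * (v 1 - v 0)"
    using n sum_lessThan_telescope[of "\<lambda>k. v (a k)" n] by (simp add: a_def)
  also have "\<dots> \<le> (1 / real n) / 2 * V"
    using vp(1,2) by (intro mult_left_mono) auto
  finally show ?thesis by simp
qed



lemma set_integral_cong_AE':
  fixes f g :: "real \<Rightarrow> real"
  assumes "set_integrable M A f" "set_integrable M A g" "AE x in M. x \<in> A \<longrightarrow> f x = g x"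
  shows "(LINT x:A|M. f x) = (LINT x:A|M. g x)"
  unfolding set_lebesgue_integral_def
proof (rule integral_cong_AE)
  show "(\<lambda>x. indicator A x *\<^sub>R f x) \<in> borel_measurable M"
    using assms(1) unfolding set_integrable_def by (rule borel_measurable_integrable)
  show "(\<lambda>x. indicator A x *\<^sub>R g x) \<in> borel_measurable M"
    using assms(2) unfolding set_integrable_def by (rule borel_measurable_integrable)
  show "AE x in M. indicator A x *\<^sub>R f x = indicator A x *\<^sub>R g x"
    using assms(3) by eventually_elim (simp split: split_indicator)
qed

lemma set_integrable_mult_bounded:
  fixes f :: "real \<Rightarrow> real"
  assumes f: "set_integrable lebesgue {0..1} f" and s: "s \<in> borel_measurable lebesgue"
    and sb: "\<And>x. \<bar>s x\<bar> \<le> 1"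
  shows "set_integrable lebesgue {0..1} (\<lambda>x. f x * s x)"
proof (rule set_integrable_bound[OF f])
  have "(\<lambda>x. (indicator {0..1} x *\<^sub>R f x) * s x) \<in> borel_measurable lebesgue"
    using borel_measurable_integrable[OF f[unfolded set_integrable_def]] s by (rule borel_measurable_times)
  then show "set_borel_measurable lebesgue {0..1} (\<lambda>x. f x * s x)"
    unfolding set_borel_measurable_def by (simp add: mult.assoc)
  show "AE x in lebesgue. x \<in> {0..1} \<longrightarrow> norm (f x * s x) \<le> norm (f x)"
    using sb by (auto intro!: AE_I2 simp: abs_mult intro: mult_left_le)
qed

lemma L_contract:
  assumes T: "nonsingular_map T" and L: "transfer_operator T L"
    and f1: "set_integrable lebesgue {0..1} f1" and f2: "set_integrable lebesgue {0..1} f2"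
  shows "(LINT x:{0..1}|lebesgue. \<bar>L f1 x - L f2 x\<bar>) \<le> (LINT x:{0..1}|lebesgue. \<bar>f1 x - f2 x\<bar>)"
proof -
  have Lf1: "set_integrable lebesgue {0..1} (L f1)" using conjunct1[OF L[unfolded transfer_operator_def, rule_format, OF f1]] .
  have Lf2: "set_integrable lebesgue {0..1} (L f2)" using conjunct1[OF L[unfolded transfer_operator_def, rule_format, OF f2]] .
  have id: "set_integrable lebesgue {0..1} (\<lambda>x. L f1 x - L f2 x)" using Lf1 Lf2 by (rule set_integral_diff(1))
  have Dm: "(\<lambda>x. indicator {0..1} x *\<^sub>R (L f1 x - L f2 x)) \<in> borel_measurable (completion lborel)"
    using borel_measurable_integrable[OF id[unfolded set_integrable_def]] by simp
  obtain D' where D'm: "D' \<in> borel_measurable lborel"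
    and D'ae: "AE x in lborel. indicator {0..1} x *\<^sub>R (L f1 x - L f2 x) = D' x"
    using completion_ex_borel_measurable_real[OF Dm] by blast
  define s where "s x = sgn (D' x)" for x
  have D'b: "D' \<in> borel_measurable borel" using D'm by (simp only: measurable_lborel2)
  have sb: "s \<in> borel_measurable borel" unfolding s_def using measurable_comp[OF D'b borel_measurable_sgn] by (simp add: o_def)
  have "s \<in> borel_measurable lborel" using sb by (simp only: measurable_lborel2)
  then have sb': "s \<in> borel_measurable lebesgue" by (rule measurable_completion)
  have sabs: "\<And>x. \<bar>s x\<bar> \<le> 1" by (simp add: s_def abs_sgn_eq)
  have brange: "bounded (range s)"
    unfolding bounded_iff using sabs by auto
  have Tm: "T \<in> borel_measurable (restrict_space lebesgue {0..1})"
    using T unfolding nonsingular_map_def by blast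
  have "(\<lambda>x. s (T x)) \<in> borel_measurable (restrict_space lebesgue {0..1})"
    using measurable_comp[OF Tm sb] by (simp add: o_def)
  then have sT: "(\<lambda>x. if x \<in> {0..1} then s (T x) else 0) \<in> borel_measurable lebesgue"
    by (subst (asm) measurable_restrict_space_iff) auto
  define sT' where "sT' x = (if x \<in> {0..1} then s (T x) else 0)" for x
  have sT'm: "sT' \<in> borel_measurable lebesgue" using sT unfolding sT'_def by simp
  have sT'b: "\<And>x. \<bar>sT' x\<bar> \<le> 1" using sabs by (simp add: sT'_def)
  have dual: "(LINT x:{0..1}|lebesgue. L f x * s x) = (LINT x:{0..1}|lebesgue. f x * s (T x))"
    if "set_integrable lebesgue {0..1} f" for f
    using conjunct2[OF L[unfolded transfer_operator_def, rule_format, OF that], rule_format, OF sb brange] .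
  have cT: "(LINT x:{0..1}|lebesgue. f x * s (T x)) = (LINT x:{0..1}|lebesgue. f x * sT' x)" for f :: "real \<Rightarrow> real"
    by (rule set_lebesgue_integral_cong) (auto simp: sT'_def)
  have i1: "set_integrable lebesgue {0..1} (\<lambda>x. L f1 x * s x)" by (rule set_integrable_mult_bounded[OF Lf1 sb' sabs])
  have i2: "set_integrable lebesgue {0..1} (\<lambda>x. L f2 x * s x)" by (rule set_integrable_mult_bounded[OF Lf2 sb' sabs])
  have j1: "set_integrable lebesgue {0..1} (\<lambda>x. f1 x * sT' x)" by (rule set_integrable_mult_bounded[OF f1 sT'm sT'b])
  have j2: "set_integrable lebesgue {0..1} (\<lambda>x. f2 x * sT' x)" by (rule set_integrable_mult_bounded[OF f2 sT'm sT'b])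
  have ids: "set_integrable lebesgue {0..1} (\<lambda>x. (L f1 x - L f2 x) * s x)"
    using set_integral_diff(1)[OF i1 i2] by (simp add: left_diff_distrib)
  have jd: "set_integrable lebesgue {0..1} (\<lambda>x. (f1 x - f2 x) * sT' x)"
    using set_integral_diff(1)[OF j1 j2] by (simp add: left_diff_distrib)
  have ae: "AE x in lebesgue. x \<in> {0..1} \<longrightarrow> \<bar>L f1 x - L f2 x\<bar> = (L f1 x - L f2 x) * s x"
    using AE_completion[OF D'ae]
  proof eventually_elim
    case (elim x)
    show ?case
    proof
      assume "x \<in> {0..1}"
      then have "s x = sgn (L f1 x - L f2 x)" using elim by (simp add: s_def)
      then show "\<bar>L f1 x - L f2 x\<bar> = (L f1 x - L f2 x) * s x" by (simp add: sgn_if)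
    qed
  qed
  have "(LINT x:{0..1}|lebesgue. \<bar>L f1 x - L f2 x\<bar>) = (LINT x:{0..1}|lebesgue. (L f1 x - L f2 x) * s x)"
    by (rule set_integral_cong_AE'[OF set_integrable_abs[OF id] ids ae])
  also have "\<dots> = (LINT x:{0..1}|lebesgue. L f1 x * s x) - (LINT x:{0..1}|lebesgue. L f2 x * s x)"
    using set_integral_diff(2)[OF i1 i2] by (simp add: left_diff_distrib)
  also have "\<dots> = (LINT x:{0..1}|lebesgue. f1 x * sT' x) - (LINT x:{0..1}|lebesgue. f2 x * sT' x)"
    using dual[OF f1] dual[OF f2] cT by simp
  also have "\<dots> = (LINT x:{0..1}|lebesgue. (f1 x - f2 x) * sT' x)"
    using set_integral_diff(2)[OF j1 j2] by (simp add: left_diff_distrib)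
  also have "\<dots> \<le> (LINT x:{0..1}|lebesgue. \<bar>f1 x - f2 x\<bar>)"
  proof (rule set_integral_mono[OF jd set_integrable_abs[OF set_integral_diff(1)[OF f1 f2]]])
    fix x
    have "(f1 x - f2 x) * sT' x \<le> \<bar>(f1 x - f2 x) * sT' x\<bar>" by simp
    also have "\<dots> \<le> \<bar>f1 x - f2 x\<bar>" using sT'b[of x] by (simp add: abs_mult mult_left_le)
    finally show "(f1 x - f2 x) * sT' x \<le> \<bar>f1 x - f2 x\<bar>" .
  qed
  finally show ?thesis .
qed


lemma meas_AE_eq:
  fixes f g :: "real \<Rightarrow> real"
  assumes f: "f \<in> borel_measurable lebesgue" and ae: "AE x in lebesgue. f x = g x"
  shows "g \<in> borel_measurable lebesgue"
proof (rule measurableI)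
  fix A :: "real set" assume A: "A \<in> sets borel"
  have "f -` A \<inter> space lebesgue \<in> sets lebesgue" using measurable_sets[OF f A] .
  then have fA: "f -` A \<in> sets lebesgue" by simp
  have "AE x in lebesgue. x \<in> f -` A \<longleftrightarrow> x \<in> g -` A" using ae by eventually_elim auto
  then have "g -` A \<in> sets lebesgue" by (rule completion.in_sets_AE[OF _ fA]) simp
  then show "g -` A \<inter> space lebesgue \<in> sets lebesgue" by simp
qed simp

lemma set_AE_transfer:
  fixes f g :: "real \<Rightarrow> real"
  assumes A: "A \<in> sets lebesgue" and f: "set_integrable lebesgue A f"
    and ae: "AE x in lebesgue. x \<in> A \<longrightarrow> f x = g x"
  shows "set_integrable lebesgue A g" "(LINT x:A|lebesgue. f x) = (LINT x:A|lebesgue. g x)"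
proof -
  have Fm: "(\<lambda>x. indicator A x *\<^sub>R f x) \<in> borel_measurable lebesgue"
    using f unfolding set_integrable_def by (rule borel_measurable_integrable)
  have ae': "AE x in lebesgue. indicator A x *\<^sub>R f x = indicator A x *\<^sub>R g x"
    using ae by eventually_elim (simp split: split_indicator)
  have Gm: "(\<lambda>x. indicator A x *\<^sub>R g x) \<in> borel_measurable lebesgue"
    by (rule meas_AE_eq[OF Fm ae'])
  show "set_integrable lebesgue A g"
    using f integrable_cong_AE[OF Fm Gm ae'] unfolding set_integrable_def by simp
  show "(LINT x:A|lebesgue. f x) = (LINT x:A|lebesgue. g x)"
    unfolding set_lebesgue_integral_def by (rule integral_cong_AE[OF Fm Gm ae'])
qed

lemma psl_add_le:
  assumes "\<And>x. x \<in> set xs \<Longrightarrow> f x = f1 x + f2 x"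
  shows "psl f xs \<le> psl f1 xs + psl f2 xs"
  using assms
proof (induction xs rule: induct_list012)
  case (3 x y zs)
  have "\<bar>f y - f x\<bar> \<le> \<bar>f1 y - f1 x\<bar> + \<bar>f2 y - f2 x\<bar>" using "3.prems" by simp
  moreover have "psl f (y # zs) \<le> psl f1 (y # zs) + psl f2 (y # zs)" using "3.IH"(2) "3.prems" by simp
  ultimately show ?case by simp
qed auto

lemma ulam_cong:
  fixes f g :: "real \<Rightarrow> real"
  assumes n: "n > 0" and f: "set_integrable lebesgue {0..1} f"
    and ae: "AE x in lebesgue. x \<in> {0..1} \<longrightarrow> f x = g x"
  shows "ulam n f x = ulam n g x"
proof -
  define k where "k = min (n - 1) (nat \<lfloor>x * real n\<rfloor>)"
  have sub: "{real k / real n .. real (Suc k) / real n} \<subseteq> {0..1}"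
    using n by (auto simp: k_def field_simps)
  have fi: "set_integrable lebesgue {real k / real n .. real (Suc k) / real n} f"
    by (rule set_integrable_subset[OF f _ sub]) simp
  have ae2: "AE x in lebesgue. x \<in> {real k / real n .. real (Suc k) / real n} \<longrightarrow> f x = g x"
    using ae by eventually_elim (use sub in blast)
  show ?thesis unfolding ulam_def Let_def k_def[symmetric]
    using set_AE_transfer(2)[OF _ fi ae2] by simp
qed



theorem lemma23:
  fixes T :: "real \<Rightarrow> real" and L :: "(real \<Rightarrow> real) \<Rightarrow> (real \<Rightarrow> real)"
    and \<rho> f\<^sub>\<xi> f' :: "real \<Rightarrow> real" and \<xi> \<delta> :: real and n :: nat
  assumes T: "nonsingular_map T"
    and L: "transfer_operator T L"
    and rho_bv: "tvar \<rho> UNIV < \<infinity>"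
    and rho_supp: "\<forall>x. \<bar>x\<bar> > 1/2 \<longrightarrow> \<rho> x = 0"
    and rho_int: "integrable lebesgue \<rho>" "(LINT x|lebesgue. \<rho> x) = 1"
    and xi: "\<xi> > 0"
    and delta: "n > 0" "\<delta> = 1 / real n"
    and inv_int: "set_integrable lebesgue {0..1} f\<^sub>\<xi>"
    and inv_nonneg: "AE x in lebesgue. x \<in> {0..1} \<longrightarrow> f\<^sub>\<xi> x \<ge> 0"
    and inv_prob: "(LINT x:{0..1}|lebesgue. f\<^sub>\<xi> x) = 1"
    and inv_fix: "AE x in lebesgue. x \<in> {0..1} \<longrightarrow> noise_op \<rho> \<xi> (L f\<^sub>\<xi>) x = f\<^sub>\<xi> x"
    and f'_int: "set_integrable lebesgue {0..1} f'"
  shows "ereal (LINT x:{0..1}|lebesgue. \<bar>ulam n f\<^sub>\<xi> x - f\<^sub>\<xi> x\<bar>)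
     \<le> ereal (\<delta> / 2 / \<xi>) * tvar \<rho> UNIV * ereal (LINT x:{0..1}|lebesgue. \<bar>f\<^sub>\<xi> x - f' x\<bar>)
       + ereal (\<delta> / 2) * tvar (noise_op \<rho> \<xi> (L f')) {0..1}"
proof -
  define R where "R = real_of_ereal (tvar \<rho> UNIV)"
  have Rfin: "tvar \<rho> UNIV = ereal R" and R0: "R \<ge> 0"
    using rho_fin[OF rho_bv] unfolding R_def by auto
  have rp: "\<And>xs. sorted xs \<Longrightarrow> psl \<rho> xs \<le> R" using rho_psl[OF rho_bv] unfolding R_def .
  have rb: "\<And>t. \<bar>\<rho> t\<bar> \<le> R" using rho_bound[OF rho_bv rho_supp] unfolding R_def .
  have rm: "\<rho> \<in> borel_measurable lebesgue" by (rule borel_measurable_integrable[OF rho_int(1)])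
  have Lfx: "set_integrable lebesgue {0..1} (L f\<^sub>\<xi>)"
    using conjunct1[OF L[unfolded transfer_operator_def, rule_format, OF inv_int]] .
  have Lf': "set_integrable lebesgue {0..1} (L f')"
    using conjunct1[OF L[unfolded transfer_operator_def, rule_format, OF f'_int]] .
  define h where "h y = L f\<^sub>\<xi> y - L f' y" for y
  have hi: "set_integrable lebesgue {0..1} h" unfolding h_def by (rule set_integral_diff(1)[OF Lfx Lf'])
  define E where "E = (LINT x:{0..1}|lebesgue. \<bar>f\<^sub>\<xi> x - f' x\<bar>)"
  define Dh where "Dh = (LINT x:{0..1}|lebesgue. \<bar>h x\<bar>)"
  have DhE: "Dh \<le> E" unfolding Dh_def E_def h_def by (rule L_contract[OF T L inv_int f'_int])
  have cz: "\<And>f x. x < -\<xi>/2 \<or> x > 1 + \<xi>/2 \<Longrightarrow> conv_ext \<rho> \<xi> f x = 0"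
    by (rule conv_zero[OF rho_supp xi])
  have conv_lin: "conv_ext \<rho> \<xi> (L f\<^sub>\<xi>) x = conv_ext \<rho> \<xi> (L f') x + conv_ext \<rho> \<xi> h x" for x
  proof -
    have "conv_ext \<rho> \<xi> h x = conv_ext \<rho> \<xi> (L f\<^sub>\<xi>) x - conv_ext \<rho> \<xi> (L f') x"
      unfolding conv_ext_def h_def
      using set_integral_diff(2)[OF kh_int[OF rm xi rb Lfx, of x] kh_int[OF rm xi rb Lf', of x]]
      by (simp add: right_diff_distrib)
    then show ?thesis by simp
  qed
  have noise_lin: "noise_op \<rho> \<xi> (L f\<^sub>\<xi>) y = noise_op \<rho> \<xi> (L f') y + noise_op \<rho> \<xi> h y"
    if y: "y \<in> {0..1}" for y
  proof -
    have cz1: "\<And>x. x < -\<xi>/2 \<or> x > 1 + \<xi>/2 \<Longrightarrow> conv_ext \<rho> \<xi> (L f\<^sub>\<xi>) x = 0" by (rule cz)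
    have cz2: "\<And>x. x < -\<xi>/2 \<or> x > 1 + \<xi>/2 \<Longrightarrow> conv_ext \<rho> \<xi> (L f') x = 0" by (rule cz)
    have cz3: "\<And>x. x < -\<xi>/2 \<or> x > 1 + \<xi>/2 \<Longrightarrow> conv_ext \<rho> \<xi> h x = 0" by (rule cz)
    let ?I = "{-(\<lceil>\<xi>\<rceil>+1)..\<lceil>\<xi>\<rceil>+1}"
    have e1: "fold_push (conv_ext \<rho> \<xi> (L f\<^sub>\<xi>)) y = (\<Sum>i\<in>?I. conv_ext \<rho> \<xi> (L f\<^sub>\<xi>) (2 * real_of_int i + y) + conv_ext \<rho> \<xi> (L f\<^sub>\<xi>) (2 * real_of_int i - y))"
      by (rule fold_finite[OF xi cz1 y])
    have e2: "fold_push (conv_ext \<rho> \<xi> (L f')) y = (\<Sum>i\<in>?I. conv_ext \<rho> \<xi> (L f') (2 * real_of_int i + y) + conv_ext \<rho> \<xi> (L f') (2 * real_of_int i - y))"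
      by (rule fold_finite[OF xi cz2 y])
    have e3: "fold_push (conv_ext \<rho> \<xi> h) y = (\<Sum>i\<in>?I. conv_ext \<rho> \<xi> h (2 * real_of_int i + y) + conv_ext \<rho> \<xi> h (2 * real_of_int i - y))"
      by (rule fold_finite[OF xi cz3 y])
    show ?thesis unfolding noise_op_def e1 e2 e3
      by (simp add: conv_lin sum.distrib algebra_simps)
  qed
  have Hpsl: "psl (noise_op \<rho> \<xi> h) ys \<le> R / \<xi> * Dh" if ys: "sorted ys" "set ys \<subseteq> {0..1}" for ys
    unfolding noise_op_def Dh_def
    by (rule fold_psl[OF xi cz conv_psl[OF rm xi rb rp hi] ys])
  define K where "K = tvar (noise_op \<rho> \<xi> (L f')) {0..1}"
  have K0: "ereal 0 \<le> K" unfolding K_def using tvar_ge[of "[0]" "{0..1}" "noise_op \<rho> \<xi> (L f')"] by simp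
  show ?thesis
  proof (cases "K = \<infinity>")
    case True
    have d0: "\<delta> / 2 > 0" using delta by simp
    have i1: "ereal (\<delta> / 2) * K = \<infinity>" using True d0 by simp
    have i2: "ereal (\<delta> / 2 / \<xi>) * tvar \<rho> UNIV * ereal E = ereal (\<delta> / 2 / \<xi> * R * E)"
      by (simp add: Rfin)
    have X: "ereal (\<delta> / 2 / \<xi>) * tvar \<rho> UNIV * ereal E + ereal (\<delta> / 2) * K = \<infinity>"
      unfolding i1 i2 by simp
    show ?thesis unfolding K_def[symmetric] E_def[symmetric] X by simp
  next
    case False
    then obtain Kr where Kr: "K = ereal Kr" using K0 by (cases K) auto
    have Kr0: "Kr \<ge> 0" using K0 Kr by simp
    define g where "g = noise_op \<rho> \<xi> (L f\<^sub>\<xi>)"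
    have gpsl: "psl g ys \<le> Kr + R / \<xi> * Dh" if ys: "sorted ys" "set ys \<subseteq> {0..1}" for ys
    proof -
      have "psl g ys \<le> psl (noise_op \<rho> \<xi> (L f')) ys + psl (noise_op \<rho> \<xi> h) ys"
        unfolding g_def by (rule psl_add_le) (use noise_lin ys in auto)
      moreover have "psl (noise_op \<rho> \<xi> (L f')) ys \<le> Kr"
      proof (cases "ys = []")
        case True then show ?thesis using Kr0 by simp
      next
        case False
        have "ereal (psl (noise_op \<rho> \<xi> (L f')) ys) \<le> K" unfolding K_def by (rule tvar_ge[OF ys False])
        then show ?thesis using Kr by simp
      qed
      ultimately show ?thesis using Hpsl[OF ys] by simp
    qed
    have ae': "AE x in lebesgue. x \<in> {0..1} \<longrightarrow> f\<^sub>\<xi> x = g x"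
      using inv_fix unfolding g_def by eventually_elim auto
    have gi: "set_integrable lebesgue {0..1} g" by (rule set_AE_transfer(1)[OF _ inv_int ae']) simp
    have ub: "(LINT x:{0..1}|lebesgue. \<bar>ulam n g x - g x\<bar>) \<le> (Kr + R / \<xi> * Dh) / (2 * real n)"
      by (rule ulam_bound[OF delta(1) gi gpsl])
    have uc: "ulam n f\<^sub>\<xi> x = ulam n g x" for x by (rule ulam_cong[OF delta(1) inv_int ae'])
    have "(LINT x:{0..1}|lebesgue. \<bar>ulam n f\<^sub>\<xi> x - f\<^sub>\<xi> x\<bar>) \<le> (Kr + R / \<xi> * Dh) / (2 * real n)"
    proof (cases "set_integrable lebesgue {0..1} (\<lambda>x. \<bar>ulam n f\<^sub>\<xi> x - f\<^sub>\<xi> x\<bar>)")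
      case True
      have "AE x in lebesgue. x \<in> {0..1} \<longrightarrow> \<bar>ulam n f\<^sub>\<xi> x - f\<^sub>\<xi> x\<bar> = \<bar>ulam n g x - g x\<bar>"
        using ae' by eventually_elim (auto simp: uc)
      then have "(LINT x:{0..1}|lebesgue. \<bar>ulam n f\<^sub>\<xi> x - f\<^sub>\<xi> x\<bar>) = (LINT x:{0..1}|lebesgue. \<bar>ulam n g x - g x\<bar>)"
        using set_AE_transfer(2)[OF _ True] by simp
      then show ?thesis using ub by simp
    next
      case False
      then have "(LINT x:{0..1}|lebesgue. \<bar>ulam n f\<^sub>\<xi> x - f\<^sub>\<xi> x\<bar>) = 0"
        unfolding set_lebesgue_integral_def set_integrable_def by (rule not_integrable_integral_eq)
      moreover have "0 \<le> R / \<xi> * Dh"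
        unfolding Dh_def using R0 xi set_integral_mono[OF set_integrable_const_Icc set_integrable_abs[OF hi], of 0]
        by (simp add: set_integral_const_Icc)
      ultimately show ?thesis using Kr0 delta(1) by simp
    qed
    also have "\<dots> \<le> (Kr + R / \<xi> * E) / (2 * real n)"
      using DhE R0 xi delta(1) by (intro divide_right_mono add_left_mono mult_left_mono) auto
    also have "\<dots> = \<delta> / 2 / \<xi> * R * E + \<delta> / 2 * Kr"
      unfolding delta(2) using delta(1) xi by (simp add: field_simps)
    finally show ?thesis using Rfin Kr unfolding K_def[symmetric] E_def[symmetric] by simp
  qed
qed


end
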